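(* If $X$ is a pseudocompact space and $G$ is an NSS group, then $C_p(X,G)$ is TAP.
   Context: All spaces are Tychonoff and non-empty; all topological groups are Hausdorff. $C_p(X,G)$ is the group of all continuous maps $X\to G$ with pointwise group operations and the topology of pointwise convergence. A topological group is NSS if some open neighborhood of the identity contains no nontrivial subgroup. A subset $A$ of a topological group $H$ is absolutely productive in $H$ if for every injection $a:\mathbb{N}\to A$ and every map $z:\mathbb{N}\to\mathbb{Z}$ the sequence $\left(\prod_{n=0}^{k}a(n)^{z(n)}\right)_{k\in\mathbb{N}}$ converges in $H$; $H$ is TAP if every absolutely productive subset of $H$ is finite. *)

theory Defs
  imports "HOL-Analysis.Analysis"
begin

definition tychonoff_space :: "'a topology \<Rightarrow> bool" where
  "tychonoff_space X \<longleftrightarrow> completely_regular_space X \<and> Hausdorff_space X"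

definition pseudocompact :: "'a topology \<Rightarrow> bool" where
  "pseudocompact X \<longleftrightarrow>
     (\<forall>f. continuous_map X euclideanreal f \<longrightarrow> bounded (f ` topspace X))"

section \<open>NSS groups (a Hausdorff topological group is a type of class
  topological_group_add + t2_space; group_add is not assumed commutative)\<close>

definition is_add_subgroup :: "'g::group_add set \<Rightarrow> bool" where
  "is_add_subgroup S \<longleftrightarrow> 0 \<in> S \<and> (\<forall>x\<in>S. \<forall>y\<in>S. x + y \<in> S) \<and> (\<forall>x\<in>S. - x \<in> S)"

definition NSS :: "'g::topological_group_add itself \<Rightarrow> bool" where
  "NSS _ \<longleftrightarrow> (\<exists>U::'g set. open U \<and> 0 \<in> U \<and>
      (\<forall>S. is_add_subgroup S \<and> S \<subseteq> U \<longrightarrow> S = {0}))"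

section \<open>Absolutely productive sets and TAP, for an abstract topological group
  given by its topology T (carrier = topspace T), multiplication, inverse, identity\<close>

definition gzpow :: "('h \<Rightarrow> 'h \<Rightarrow> 'h) \<Rightarrow> ('h \<Rightarrow> 'h) \<Rightarrow> 'h \<Rightarrow> 'h \<Rightarrow> int \<Rightarrow> 'h" where
  "gzpow mul ginv one x k =
     (if 0 \<le> k then ((\<lambda>y. mul y x) ^^ nat k) one
      else ((\<lambda>y. mul y (ginv x)) ^^ nat (- k)) one)"

fun partial_prod :: "('h \<Rightarrow> 'h \<Rightarrow> 'h) \<Rightarrow> ('h \<Rightarrow> 'h) \<Rightarrow> 'h \<Rightarrow> (nat \<Rightarrow> 'h) \<Rightarrow> (nat \<Rightarrow> int) \<Rightarrow> nat \<Rightarrow> 'h" where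
  "partial_prod mul ginv one a z 0 = gzpow mul ginv one (a 0) (z 0)"
| "partial_prod mul ginv one a z (Suc k) =
     mul (partial_prod mul ginv one a z k) (gzpow mul ginv one (a (Suc k)) (z (Suc k)))"

definition absolutely_productive ::
  "'h topology \<Rightarrow> ('h \<Rightarrow> 'h \<Rightarrow> 'h) \<Rightarrow> ('h \<Rightarrow> 'h) \<Rightarrow> 'h \<Rightarrow> 'h set \<Rightarrow> bool" where
  "absolutely_productive T mul ginv one A \<longleftrightarrow> A \<subseteq> topspace T \<and>
     (\<forall>a z. inj a \<and> range a \<subseteq> A \<longrightarrow>
        (\<exists>h. limitin T (partial_prod mul ginv one a z) h sequentially))"

definition TAP :: "'h topology \<Rightarrow> ('h \<Rightarrow> 'h \<Rightarrow> 'h) \<Rightarrow> ('h \<Rightarrow> 'h) \<Rightarrow> 'h \<Rightarrow> bool" where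
  "TAP T mul ginv one \<longleftrightarrow>
     (\<forall>A. A \<subseteq> topspace T \<and> absolutely_productive T mul ginv one A \<longrightarrow> finite A)"

section \<open>C_p(X,G): continuous maps X \<rightarrow> G (extensional outside topspace X),
  pointwise operations, topology of pointwise convergence (subspace of the product)\<close>

definition Cp_carrier :: "'a topology \<Rightarrow> ('a \<Rightarrow> 'g::topological_space) set" where
  "Cp_carrier X = {f. continuous_map X euclidean f \<and> f \<in> extensional (topspace X)}"

definition Cp_top :: "'a topology \<Rightarrow> ('a \<Rightarrow> 'g::topological_space) topology" where
  "Cp_top X = subtopology (product_topology (\<lambda>_. euclidean) (topspace X)) (Cp_carrier X)"

definition Cp_mul :: "'a topology \<Rightarrow> ('a \<Rightarrow> 'g::group_add) \<Rightarrow> ('a \<Rightarrow> 'g) \<Rightarrow> ('a \<Rightarrow> 'g)" where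
  "Cp_mul X f g = restrict (\<lambda>x. f x + g x) (topspace X)"

definition Cp_inv :: "'a topology \<Rightarrow> ('a \<Rightarrow> 'g::group_add) \<Rightarrow> ('a \<Rightarrow> 'g)" where
  "Cp_inv X f = restrict (\<lambda>x. - f x) (topspace X)"

definition Cp_one :: "'a topology \<Rightarrow> ('a \<Rightarrow> 'g::group_add)" where
  "Cp_one X = restrict (\<lambda>x. 0) (topspace X)"

end

theory Submission
  imports Defs
begin


definition zm :: "int \<Rightarrow> 'g::group_add \<Rightarrow> 'g" where
  "zm k g = gzpow (+) uminus 0 g k"

fun psum :: "(nat \<Rightarrow> 'g::group_add) \<Rightarrow> nat \<Rightarrow> 'g" where
  "psum w 0 = w 0"
| "psum w (Suc n) = psum w n + w (Suc n)"

lemma pp_psum: "partial_prod (+) uminus 0 a z n = psum (\<lambda>i. zm (z i) (a i)) n"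
  by (induction n) (simp_all add: zm_def)

definition rr :: "nat \<Rightarrow> 'g::group_add \<Rightarrow> 'g" where
  "rr n g = ((\<lambda>y. y + g) ^^ n) 0"

lemma rr_0[simp]: "rr 0 g = 0" by (simp add: rr_def)
lemma rr_Suc: "rr (Suc n) g = rr n g + g" by (simp add: rr_def)

lemma rr_add: "rr (m + n) g = rr m g + rr n g"
  by (induction n) (simp_all add: rr_Suc add.assoc)

lemma rr_comm: "rr m g + rr n g = rr n g + rr m g"
  by (metis rr_add add.commute)

lemma rr_Suc': "rr (Suc n) g = g + rr n g"
  using rr_comm[of n g 1] by (simp add: rr_Suc)

lemma rr_neg: "((\<lambda>y. y - g) ^^ n) 0 = - rr n g"
proof (induction n)
  case (Suc n)
  then show ?case by (simp add: rr_Suc' minus_add)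
qed simp

lemma zm_alt: "zm k g = (if 0 \<le> k then rr (nat k) g else - rr (nat (-k)) g)"
  by (simp add: zm_def gzpow_def rr_neg rr_def)

lemma zm_0[simp]: "zm 0 g = 0" by (simp add: zm_alt)

lemma zm_1: "zm 1 g = g"
  by (simp add: zm_alt rr_def)

lemma rr_zero[simp]: "rr n (0::'g::group_add) = 0"
  by (induction n) (simp_all add: rr_Suc)

lemma zm_zero[simp]: "zm k (0::'g::group_add) = 0"
  by (simp add: zm_alt)

lemma zm_plus1: "zm (a + 1) g = zm a g + g"
proof (cases "0 \<le> a")
  case True
  then have "nat (a+1) = Suc (nat a)" by simp
  then show ?thesis using True by (simp add: zm_alt rr_Suc)
next
  case False
  define n where "n = nat (- a)"
  have n1: "n \<ge> 1" using False n_def by simp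
  have "rr n g = g + rr (n - 1) g" using rr_Suc'[of "n-1" g] n1 by simp
  then have "- rr n g + g = - rr (n - 1) g" by (simp add: minus_add add.assoc)
  moreover have "zm (a+1) g = - rr (n - 1) g"
    using False n_def by (cases "a = -1") (auto simp: zm_alt nat_diff_distrib)
  ultimately show ?thesis using False n_def by (simp add: zm_alt)
qed

lemma zm_minus1: "zm (a - 1) g = zm a g + - g"
proof (cases "1 \<le> a")
  case True
  define n where "n = nat a"
  have n1: "n \<ge> 1" using True n_def by simp
  have "rr n g = rr (n - 1) g + g" using rr_Suc[of "n-1" g] n1 by simp
  then have "rr (n-1) g = rr n g + - g" by (simp add: add.assoc)
  moreover have "nat (a - 1) = n - 1" using n_def by simp
  ultimately show ?thesis using True n_def by (simp add: zm_alt)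
next
  case False
  define n where "n = nat (- a)"
  have "nat (- (a - 1)) = Suc n" using False n_def by simp
  then have "zm (a - 1) g = - rr (Suc n) g" using False by (simp add: zm_alt)
  also have "\<dots> = - rr n g + - g" by (simp add: rr_Suc' minus_add)
  also have "- rr n g = zm a g" using False n_def by (cases "a = 0") (auto simp: zm_alt)
  finally show ?thesis .
qed

lemma zm_add: "zm (a + b) g = zm a g + zm b g"
proof (induction b rule: int_induct[where k=0])
  case base then show ?case by simp
next
  case (step1 i)
  have "zm (a + (i+1)) g = zm ((a + i) + 1) g" by (simp add: add.assoc)
  also have "\<dots> = zm a g + zm i g + g" using zm_plus1 step1 by metis
  also have "\<dots> = zm a g + zm (i+1) g" by (simp add: zm_plus1 add.assoc)
  finally show ?case .
next
  case (step2 i)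
  have "zm (a + (i-1)) g = zm ((a + i) - 1) g" by (simp add: algebra_simps)
  also have "\<dots> = zm a g + zm i g + - g" using zm_minus1 step2 by metis
  also have "\<dots> = zm a g + zm (i-1) g" by (metis zm_minus1 add.assoc)
  finally show ?case .
qed

lemma zm_neg: "zm (- a) g = - zm a g"
  using zm_add[of a "-a" g] by (simp add: minus_unique)

lemma nss_mult:
  fixes U :: "'g::group_add set"
  assumes "\<forall>S. is_add_subgroup S \<and> S \<subseteq> U \<longrightarrow> S = {0}" "g \<noteq> 0"
  shows "\<exists>k. zm k g \<notin> U"
proof (rule ccontr)
  assume "\<not> ?thesis"
  then have sub: "range (\<lambda>k. zm k g) \<subseteq> U" by auto
  have "is_add_subgroup (range (\<lambda>k. zm k g))"
    unfolding is_add_subgroup_def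
    by (auto simp: image_iff zm_add[symmetric] zm_neg[symmetric] intro: exI[of _ 0]) 
  then have "range (\<lambda>k. zm k g) = {0}" using assms(1) sub by blast
  moreover have "g \<in> range (\<lambda>k. zm k g)" using zm_1 by (metis rangeI)
  ultimately show False using assms(2) by auto
qed

lemma rr_cont: "continuous_on UNIV (rr n :: 'g::topological_group_add \<Rightarrow> 'g)"
proof (induction n)
  case 0 then show ?case by (simp add: rr_def)
next
  case (Suc n)
  have "rr (Suc n) = (\<lambda>g. rr n g + (g::'g))" by (simp add: rr_Suc fun_eq_iff)
  then show ?case using Suc by (auto intro!: continuous_intros)
qed

lemma zm_cont: "continuous_on UNIV (zm k :: 'g::topological_group_add \<Rightarrow> 'g)"
proof -
  have "zm k = (if 0 \<le> k then rr (nat k) else (\<lambda>g. - rr (nat (-k)) g))"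
    by (simp add: fun_eq_iff zm_alt)
  show ?thesis
  proof (cases "0 \<le> k")
    case True then show ?thesis using rr_cont[of "nat k"] by (simp add: zm_alt[abs_def])
  next
    case False
    have "continuous_on UNIV (\<lambda>g. - rr (nat (-k)) (g::'g))"
      by (intro continuous_on_minus rr_cont)
    then show ?thesis using False by (simp add: zm_alt[abs_def])
  qed
qed

lemma cm_add:
  fixes f g :: "'a \<Rightarrow> 'g::topological_monoid_add"
  shows "continuous_map X euclidean f \<Longrightarrow> continuous_map X euclidean g \<Longrightarrow> continuous_map X euclidean (\<lambda>x. f x + g x)"
  by (simp add: continuous_map_atin tendsto_add)

lemma cm_compose_on:
  "continuous_map X euclidean f \<Longrightarrow> continuous_on UNIV h \<Longrightarrow> continuous_map X euclidean (\<lambda>x. h (f x))"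
  using continuous_map_compose[of X euclidean f euclidean h] by (simp add: o_def)



lemma pseudo_cluster:
  fixes Op :: "nat \<Rightarrow> 'a set"
  assumes cr: "completely_regular_space X" and pc: "pseudocompact X"
    and Op: "\<And>n. openin X (Op n)" "\<And>n. Op n \<noteq> {}"
  shows "\<exists>p\<in>topspace X. \<forall>W. openin X W \<and> p \<in> W \<longrightarrow> (\<forall>N. \<exists>n\<ge>N. W \<inter> Op n \<noteq> {})"
proof (rule ccontr)
  assume nt: "\<not> ?thesis"
  have ex: "\<exists>W. openin X W \<and> p \<in> W \<and> (\<exists>N. \<forall>n\<ge>N. W \<inter> Op n = {})" if p: "p \<in> topspace X" for p
  proof -
    have "\<not> (\<forall>W. openin X W \<and> p \<in> W \<longrightarrow> (\<forall>N. \<exists>n\<ge>N. W \<inter> Op n \<noteq> {}))"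
      using nt p by (simp only: bex_simps) (meson bexI)
    then obtain W where W: "openin X W" "p \<in> W" "\<not> (\<forall>N. \<exists>n\<ge>N. W \<inter> Op n \<noteq> {})"
      by (simp only: not_all not_imp) blast
    then show ?thesis by (intro exI[of _ W]) auto
  qed
  define W where "W p = (SOME W. openin X W \<and> p \<in> W \<and> (\<exists>N. \<forall>n\<ge>N. W \<inter> Op n = {}))" for p
  have W1: "openin X (W p) \<and> p \<in> W p \<and> (\<exists>N. \<forall>n\<ge>N. W p \<inter> Op n = {})" if "p \<in> topspace X" for p
    unfolding W_def by (rule someI_ex) (rule ex[OF that])
  define NN where "NN p = (SOME N. \<forall>n\<ge>N. W p \<inter> Op n = {})" for p
  have WN: "openin X (W p) \<and> p \<in> W p \<and> (\<forall>n\<ge>NN p. W p \<inter> Op n = {})" if "p \<in> topspace X" for p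
  proof -
    have "\<forall>n\<ge>NN p. W p \<inter> Op n = {}"
      unfolding NN_def by (rule someI_ex) (use W1[OF that] in blast)
    then show ?thesis using W1[OF that] by blast
  qed
  have "\<exists>x. x \<in> Op n" for n using Op(2) by blast
  then obtain xp where xp: "\<And>n. xp n \<in> Op n" by metis
  have xpt: "xp n \<in> topspace X" for n using xp Op(1) openin_subset by blast
  have "\<forall>n. \<exists>\<phi>. continuous_map X (top_of_set {0..1::real}) \<phi> \<and> \<phi> (xp n) = 0 \<and> \<phi> ` (topspace X - Op n) \<subseteq> {1}"
  proof
    fix n
    have "closedin X (topspace X - Op n)" using Op(1) by blast
    moreover have "xp n \<in> topspace X - (topspace X - Op n)" using xp xpt by blast
    ultimately show "\<exists>\<phi>. continuous_map X (top_of_set {0..1::real}) \<phi> \<and> \<phi> (xp n) = 0 \<and> \<phi> ` (topspace X - Op n) \<subseteq> {1}"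
      using cr unfolding completely_regular_space_def by blast
  qed
  then have "\<exists>\<phi>. \<forall>n. continuous_map X (top_of_set {0..1::real}) (\<phi> n) \<and> \<phi> n (xp n) = 0 \<and> \<phi> n ` (topspace X - Op n) \<subseteq> {1}"
    by (rule choice)
  then obtain \<phi> where \<phi>: "\<And>n. continuous_map X (top_of_set {0..1::real}) (\<phi> n) \<and> \<phi> n (xp n) = 0 \<and> \<phi> n ` (topspace X - Op n) \<subseteq> {1}"
    by blast
  define g where "g n x = 1 - \<phi> n x" for n x
  have gc: "continuous_map X euclideanreal (g n)" for n
    using \<phi>[of n] unfolding g_def
    by (auto intro!: continuous_intros simp: continuous_map_in_subtopology)
  have g01: "0 \<le> g n x" if "x \<in> topspace X" for n x
    using \<phi>[of n] that unfolding g_def continuous_map_in_subtopology by (auto simp: image_subset_iff)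
  have g0: "g n x = 0" if "x \<in> topspace X" "x \<notin> Op n" for n x
    using \<phi>[of n] that unfolding g_def by auto
  have gx: "g n (xp n) = 1" for n using \<phi>[of n] unfolding g_def by auto
  define F where "F x = (\<Sum>n. real n * g n x)" for x
  have Floc: "F x = (\<Sum>n<NN p. real n * g n x)" if "p \<in> topspace X" "x \<in> W p" for p x
  proof -
    have xt: "x \<in> topspace X" using WN[OF that(1)] that(2) openin_subset by blast
    have nO: "x \<notin> Op n" if "n \<ge> NN p" for n using WN[OF \<open>p \<in> topspace X\<close>] \<open>x \<in> W p\<close> that by blast
    show ?thesis unfolding F_def
    proof (rule suminf_finite)
      fix n assume "n \<notin> {..<NN p}"
      then have "x \<notin> Op n" using nO by simp
      then show "real n * g n x = 0" using g0[OF xt] by simp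
    qed simp
  qed
  have Fc: "continuous_map X euclideanreal F"
    unfolding continuous_map_atin
  proof
    fix p assume p: "p \<in> topspace X"
    define G where "G x = (\<Sum>n<NN p. real n * g n x)" for x
    have cG: "continuous_map X euclideanreal G" unfolding G_def
      by (intro continuous_map_sum continuous_map_real_mult_left gc) auto
    have "limitin euclideanreal G (G p) (atin X p)"
      using cG p unfolding continuous_map_atin by (rule bspec)
    moreover have "eventually (\<lambda>x. G x = F x) (atin X p)"
    proof -
      have "\<forall>x\<in>W p - {p}. G x = F x" using Floc[OF p] G_def by simp
      then show ?thesis unfolding eventually_atin using WN[OF p] by blast
    qed
    moreover have "G p = F p" using Floc[OF p] WN[OF p] G_def by simp
    ultimately show "limitin euclideanreal F (F p) (atin X p)"
      using limitin_transform_eventually[of G F "atin X p" euclideanreal "G p"] by simp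
  qed
  then have "bounded (F ` topspace X)" using pc unfolding pseudocompact_def by blast
  then obtain B where B: "\<And>x. x \<in> topspace X \<Longrightarrow> \<bar>F x\<bar> \<le> B"
    unfolding bounded_iff by auto
  obtain m :: nat where m: "real m > B" using reals_Archimedean2 by blast
  have Fm: "F (xp m) = (\<Sum>n<NN (xp m). real n * g n (xp m))" using Floc[OF xpt[of m]] WN[OF xpt[of m]] by simp
  have mN: "m < NN (xp m)"
    using WN[OF xpt[of m]] xp[of m] by (meson disjoint_iff not_le)
  have "F (xp m) \<ge> real m * g m (xp m)"
  proof -
    have "\<And>n. n \<in> {..<NN (xp m)} - {m} \<Longrightarrow> 0 \<le> real n * g n (xp m)"
      using g01 xpt by simp
    then have "real m * g m (xp m) \<le> (\<Sum>n<NN (xp m). real n * g n (xp m))"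
      using member_le_sum[of m "{..<NN (xp m)}" "\<lambda>n. real n * g n (xp m)"] mN by simp
    then show ?thesis using Fm by simp
  qed
  then have "F (xp m) \<ge> real m" using gx by simp
  then show False using B[OF xpt[of m]] m by auto
qed



lemma cluster_closure:
  assumes cl: "\<forall>W. openin X W \<and> p \<in> W \<longrightarrow> (\<forall>N. \<exists>n\<ge>N. W \<inter> A n \<noteq> {})"
    and pt: "p \<in> topspace X" and dec: "\<And>n. n \<ge> N \<Longrightarrow> A n \<subseteq> A N"
  shows "p \<in> X closure_of A N"
proof -
  have "\<exists>y. y \<in> A N \<and> y \<in> T" if T: "p \<in> T \<and> openin X T" for T
  proof -
    have "\<forall>N. \<exists>n\<ge>N. T \<inter> A n \<noteq> {}" using cl T by simp
    then obtain n where n: "n \<ge> N" "T \<inter> A n \<noteq> {}" by blast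
    then obtain y where "y \<in> T" "y \<in> A n" by blast
    then show ?thesis using dec[OF n(1)] by blast
  qed
  then show ?thesis using pt unfolding in_closure_of by blast
qed

lemma local_vanish:
  fixes f :: "nat \<Rightarrow> 'a \<Rightarrow> 'g::{t2_space,zero}"
  assumes cr: "completely_regular_space X" and pc: "pseudocompact X"
    and cont: "\<And>n. continuous_map X euclidean (f n)"
    and ev: "\<And>x. x \<in> topspace X \<Longrightarrow> \<exists>N. \<forall>n\<ge>N. f n x = 0"
    and R: "openin X R" "R \<noteq> {}"
  shows "\<exists>R' N. openin X R' \<and> R' \<noteq> {} \<and> R' \<subseteq> R \<and> (\<forall>n\<ge>N. \<forall>x\<in>R'. f n x = 0)"
proof (rule ccontr)
  assume nt: "\<not> ?thesis"
  have H: "\<exists>n\<ge>N. \<exists>x\<in>R'. f n x \<noteq> 0" if RR: "openin X R'" "R' \<noteq> {}" "R' \<subseteq> R" for R' N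
  proof (rule ccontr)
    assume "\<not> (\<exists>n\<ge>N. \<exists>x\<in>R'. f n x \<noteq> 0)"
    then have "\<forall>n\<ge>N. \<forall>x\<in>R'. f n x = 0" by blast
    then have "\<exists>R' N. openin X R' \<and> R' \<noteq> {} \<and> R' \<subseteq> R \<and> (\<forall>n\<ge>N. \<forall>x\<in>R'. f n x = 0)"
      using RR by (intro exI[of _ R'] exI[of _ N]) simp
    then show False using nt by simp
  qed
  have reg: "regular_space X" using cr by (rule completely_regular_imp_regular_space)
  have step: "\<exists>A'. openin X A' \<and> A' \<noteq> {} \<and> X closure_of A' \<subseteq> A \<and> (\<forall>x\<in>A'. \<exists>n\<ge>N. f n x \<noteq> 0)"
    if A: "openin X A" "A \<noteq> {}" "A \<subseteq> R" for A N
  proof -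
    obtain n y where ny: "n \<ge> N" "y \<in> A" "f n y \<noteq> 0" using H[OF A] by blast
    define E where "E = {x \<in> topspace X. f n x \<in> - {0}}"
    have "openin X E" unfolding E_def
      by (rule openin_continuous_map_preimage[OF cont]) (simp add: open_Compl)
    then have AE: "openin X (A \<inter> E)" using A(1) by blast
    have yt: "y \<in> topspace X" using ny A openin_subset by blast
    have yAE: "y \<in> A \<inter> E" unfolding E_def using ny yt by simp
    have clo: "closedin X (topspace X - (A \<inter> E))" using AE by blast
    obtain W where W: "openin X W" "y \<in> W" "disjnt (topspace X - (A \<inter> E)) (X closure_of W)"
    proof -
      have yin: "y \<in> topspace X - (topspace X - (A \<inter> E))" using yt yAE by blast
      obtain U where "openin X U" "y \<in> U" "disjnt (topspace X - (A \<inter> E)) (X closure_of U)"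
        using reg[unfolded regular_space, rule_format, OF conjI[OF clo yin]] by blast
      then show ?thesis by (rule that)
    qed
    have cl: "X closure_of W \<subseteq> A \<inter> E"
    proof
      fix x assume x: "x \<in> X closure_of W"
      then have "x \<in> topspace X" by (simp add: in_closure_of)
      then have "x \<notin> topspace X - (A \<inter> E)" using W(3) x by (meson disjnt_iff)
      then show "x \<in> A \<inter> E" using \<open>x \<in> topspace X\<close> by blast
    qed
    have Wc: "W \<subseteq> X closure_of W" by (rule closure_of_subset[OF openin_subset[OF W(1)]])
    have "\<forall>x\<in>W. \<exists>n\<ge>N. f n x \<noteq> 0"
    proof
      fix x assume "x \<in> W"
      then have "x \<in> E" using Wc cl by blast
      then have "f n x \<noteq> 0" unfolding E_def by simp
      then show "\<exists>n\<ge>N. f n x \<noteq> 0" using ny(1) by blast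
    qed
    moreover have "W \<noteq> {}" using W(2) by blast
    moreover have "X closure_of W \<subseteq> A" using cl by blast
    ultimately show ?thesis using W(1) by blast
  qed
  define A where "A = rec_nat R (\<lambda>k Ak. SOME A'. openin X A' \<and> A' \<noteq> {} \<and> X closure_of A' \<subseteq> Ak \<and> (\<forall>x\<in>A'. \<exists>n\<ge>k. f n x \<noteq> 0))"
  have A0: "A 0 = R" by (simp add: A_def)
  have AS: "A (Suc k) = (SOME A'. openin X A' \<and> A' \<noteq> {} \<and> X closure_of A' \<subseteq> A k \<and> (\<forall>x\<in>A'. \<exists>n\<ge>k. f n x \<noteq> 0))" for k
    by (simp add: A_def)
  have inv: "openin X (A k) \<and> A k \<noteq> {} \<and> A k \<subseteq> R" for k
  proof (induction k)
    case 0 then show ?case using R A0 by simp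
  next
    case (Suc k)
    have ex: "\<exists>A'. openin X A' \<and> A' \<noteq> {} \<and> X closure_of A' \<subseteq> A k \<and> (\<forall>x\<in>A'. \<exists>n\<ge>k. f n x \<noteq> 0)"
      using Suc.IH by (intro step) auto
    have P: "openin X (A (Suc k)) \<and> A (Suc k) \<noteq> {} \<and> X closure_of (A (Suc k)) \<subseteq> A k \<and> (\<forall>x\<in>A (Suc k). \<exists>n\<ge>k. f n x \<noteq> 0)"
      unfolding AS by (rule someI_ex[OF ex])
    have "A (Suc k) \<subseteq> X closure_of A (Suc k)"
      using P closure_of_subset openin_subset by metis
    then show ?case using Suc.IH P by blast
  qed
  have PA: "X closure_of (A (Suc k)) \<subseteq> A k \<and> (\<forall>x\<in>A (Suc k). \<exists>n\<ge>k. f n x \<noteq> 0)" for k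
  proof -
    have ex: "\<exists>A'. openin X A' \<and> A' \<noteq> {} \<and> X closure_of A' \<subseteq> A k \<and> (\<forall>x\<in>A'. \<exists>n\<ge>k. f n x \<noteq> 0)"
      using inv[of k] by (intro step) auto
    have P: "openin X (A (Suc k)) \<and> A (Suc k) \<noteq> {} \<and> X closure_of (A (Suc k)) \<subseteq> A k \<and> (\<forall>x\<in>A (Suc k). \<exists>n\<ge>k. f n x \<noteq> 0)"
      unfolding AS by (rule someI_ex[OF ex])
    then show ?thesis by blast
  qed
  have dec1: "A (Suc k) \<subseteq> A k" for k
  proof -
    have "A (Suc k) \<subseteq> X closure_of A (Suc k)"
      using inv[of "Suc k"] closure_of_subset openin_subset by metis
    then show ?thesis using PA[of k] by blast
  qed
  have dec: "A n \<subseteq> A N" if "n \<ge> N" for n N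
    using that
  proof (induction n rule: dec_induct)
    case base then show ?case by simp
  next
    case (step n) then show ?case using dec1[of n] by blast
  qed
  have "\<exists>p\<in>topspace X. \<forall>W. openin X W \<and> p \<in> W \<longrightarrow> (\<forall>N. \<exists>n\<ge>N. W \<inter> A n \<noteq> {})"
    by (rule pseudo_cluster[OF cr pc]) (use inv in auto)
  then obtain p where p: "p \<in> topspace X" "\<forall>W. openin X W \<and> p \<in> W \<longrightarrow> (\<forall>N. \<exists>n\<ge>N. W \<inter> A n \<noteq> {})"
    by blast
  have pA: "p \<in> A (Suc k)" for k
  proof -
    have "p \<in> X closure_of A (Suc (Suc k))"
      by (rule cluster_closure[OF p(2) p(1)]) (rule dec)
    then show ?thesis using PA[of "Suc k"] by blast
  qed
  obtain N where N: "\<forall>n\<ge>N. f n p = 0" using ev[OF p(1)] by blast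
  obtain n where "n \<ge> N" "f n p \<noteq> 0" using PA[of N] pA[of N] by blast
  then show False using N by simp
qed



lemma psum_cont:
  fixes w :: "nat \<Rightarrow> 'a \<Rightarrow> 'g::topological_group_add"
  assumes "\<And>i. continuous_map X euclidean (w i)"
  shows "continuous_map X euclidean (\<lambda>x. psum (\<lambda>i. w i x) n)"
proof (induction n)
  case 0 then show ?case using assms[of 0] by simp
next
  case (Suc n)
  show ?case using cm_add[OF Suc assms[of "Suc n"]] by simp
qed

lemma psum_zero: "(\<And>i. i \<le> n \<Longrightarrow> w i = 0) \<Longrightarrow> psum w n = 0"
  by (induction n) simp_all

lemma psum_cong: "(\<And>i. i \<le> n \<Longrightarrow> w i = w' i) \<Longrightarrow> psum w n = psum w' n"
  by (induction n) simp_all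

lemma psum_stable:
  assumes "\<And>i. n0 < i \<Longrightarrow> w i = 0" and "n0 \<le> n"
  shows "psum w n = psum w n0"
  using assms(2)
proof (induction n rule: dec_induct)
  case base then show ?case by simp
next
  case (step n)
  have "w (Suc n) = 0" using assms(1) step(1) by simp
  then show ?case using step(3) by simp
qed

lemma nbhd3:
  fixes U :: "'g::topological_group_add set"
  assumes "open U" "0 \<in> U"
  shows "\<exists>V. open V \<and> 0 \<in> V \<and> (\<forall>a\<in>V. \<forall>s\<in>V. \<forall>w\<in>V. - a + s + - w \<in> U)"
proof -
  have i: "((\<lambda>p. p) \<longlongrightarrow> ((0::'g),((0::'g),(0::'g)))) (nhds (0,(0,0)))"
    by (rule filterlim_ident)
  have "((\<lambda>p. - fst p + fst (snd p) + - snd (snd p)) \<longlongrightarrow>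
          - fst ((0::'g),((0::'g),(0::'g))) + fst (snd ((0::'g),((0::'g),(0::'g)))) + - snd (snd ((0::'g),((0::'g),(0::'g)))))
        (nhds (0,(0,0)))"
    by (intro tendsto_add tendsto_minus tendsto_fst tendsto_snd i)
  then have t: "((\<lambda>p. - fst p + fst (snd p) + - snd (snd p)) \<longlongrightarrow> 0) (nhds ((0::'g),((0::'g),(0::'g))))"
    by simp
  have "eventually (\<lambda>p. - fst p + fst (snd p) + - snd (snd p) \<in> U) (nhds ((0::'g),((0::'g),(0::'g))))"
    by (rule topological_tendstoD[OF t assms])
  then have "eventually (\<lambda>p. - fst p + fst (snd p) + - snd (snd p) \<in> U) (nhds (0::'g) \<times>\<^sub>F (nhds (0::'g) \<times>\<^sub>F nhds (0::'g)))"
    by (simp add: nhds_prod)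
  then obtain P1 P23 where P: "eventually P1 (nhds 0)" "eventually P23 (nhds 0 \<times>\<^sub>F nhds 0)"
     "\<forall>x y. P1 x \<longrightarrow> P23 y \<longrightarrow> - fst (x,y) + fst (snd (x,y)) + - snd (snd (x,y)) \<in> U"
    unfolding eventually_prod_filter by blast
  then obtain P2 P3 where Q: "eventually P2 (nhds (0::'g))" "eventually P3 (nhds (0::'g))"
     "\<forall>x y. P2 x \<longrightarrow> P3 y \<longrightarrow> P23 (x,y)"
    unfolding eventually_prod_filter by blast
  have "eventually (\<lambda>x. P1 x \<and> P2 x \<and> P3 x) (nhds 0)"
    using P(1) Q(1) Q(2) by (intro eventually_conj)
  then obtain V where V: "open V" "0 \<in> V" "\<forall>x\<in>V. P1 x \<and> P2 x \<and> P3 x"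
    unfolding eventually_nhds by blast
  have "\<forall>a\<in>V. \<forall>s\<in>V. \<forall>w\<in>V. - a + s + - w \<in> U"
  proof (intro ballI)
    fix a s w assume "a \<in> V" "s \<in> V" "w \<in> V"
    then have "P1 a" "P23 (s, w)" using V(3) Q(3) by auto
    then show "- a + s + - w \<in> U" using P(3) by fastforce
  qed
  then show ?thesis using V(1,2) by blast
qed



lemma ev_zero:
  fixes f :: "nat \<Rightarrow> 'a \<Rightarrow> 'g::{topological_group_add,t2_space}" and U :: "'g set"
  assumes H: "\<And>z. \<exists>h. continuous_map X euclidean h \<and> (\<forall>x\<in>topspace X. (\<lambda>k. psum (\<lambda>i. zm (z i) (f i x)) k) \<longlonglongrightarrow> h x)"
    and U: "open U" "0 \<in> U" "\<forall>S. is_add_subgroup S \<and> S \<subseteq> U \<longrightarrow> S = {0}"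
    and x: "x \<in> topspace X"
  shows "\<exists>N. \<forall>n\<ge>N. f n x = 0"
proof -
  have "\<forall>n. \<exists>k. f n x \<noteq> 0 \<longrightarrow> zm k (f n x) \<notin> U"
  proof
    fix n show "\<exists>k. f n x \<noteq> 0 \<longrightarrow> zm k (f n x) \<notin> U"
    proof (cases "f n x = 0")
      case False
      then obtain k where "zm k (f n x) \<notin> U" using nss_mult[OF U(3)] by blast
      then show ?thesis by blast
    qed simp
  qed
  then obtain kk where kk: "\<forall>n. f n x \<noteq> 0 \<longrightarrow> zm (kk n) (f n x) \<notin> U"
    by (rule choice[THEN exE]) blast
  define z where "z n = (if f n x = 0 then 0 else kk n)" for n
  define w where "w i = zm (z i) (f i x)" for i
  obtain h where "\<forall>x\<in>topspace X. (\<lambda>k. psum (\<lambda>i. zm (z i) (f i x)) k) \<longlonglongrightarrow> h x"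
    using H[of z] by blast
  then have L: "psum w \<longlonglongrightarrow> h x" using x unfolding w_def by blast
  have "(\<lambda>k. - psum w k + psum w (Suc k)) \<longlonglongrightarrow> - h x + h x"
    by (intro tendsto_add tendsto_minus L LIMSEQ_Suc)
  then have "(\<lambda>k. w (Suc k)) \<longlonglongrightarrow> 0" by (simp add: add.assoc[symmetric])
  then have "eventually (\<lambda>k. w (Suc k) \<in> U) sequentially"
    by (rule topological_tendstoD[OF _ U(1) U(2)])
  then obtain N where N: "\<And>k. k \<ge> N \<Longrightarrow> w (Suc k) \<in> U"
    unfolding eventually_sequentially by blast
  have "f n x = 0" if "n \<ge> Suc N" for n
  proof (rule ccontr)
    assume nz: "f n x \<noteq> 0"
    have "n = Suc (n - 1)" "n - 1 \<ge> N" using that by auto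
    then have "w n \<in> U" using N by metis
    moreover have "w n = zm (kk n) (f n x)" using nz unfolding w_def z_def by simp
    ultimately show False using kk nz by simp
  qed
  then show ?thesis by blast
qed



lemma main_lemma:
  fixes X :: "'a topology" and f :: "nat \<Rightarrow> 'a \<Rightarrow> 'g::{topological_group_add,t2_space}"
    and U :: "'g set"
  assumes cr: "completely_regular_space X" and pc: "pseudocompact X"
    and cont: "\<And>n. continuous_map X euclidean (f n)"
    and H: "\<And>z. \<exists>h. continuous_map X euclidean h \<and> (\<forall>x\<in>topspace X. (\<lambda>k. psum (\<lambda>i. zm (z i) (f i x)) k) \<longlonglongrightarrow> h x)"
    and nz: "\<And>n. \<exists>x\<in>topspace X. f n x \<noteq> 0"
    and U: "open U" "0 \<in> U" "\<forall>S. is_add_subgroup S \<and> S \<subseteq> U \<longrightarrow> S = {0}"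
  shows False
proof -
  have ev: "\<exists>N. \<forall>n\<ge>N. f n x = 0" if "x \<in> topspace X" for x
    by (rule ev_zero[OF H U that])
  obtain V where V: "open V" "0 \<in> V" "\<forall>a\<in>V. \<forall>s\<in>V. \<forall>w\<in>V. - a + s + - w \<in> U"
    using nbhd3[OF U(1) U(2)] by blast
  have "\<forall>n. \<exists>t. fst t \<in> topspace X \<and> zm (snd t) (f n (fst t)) \<notin> U"
  proof
    fix n
    obtain x where x: "x \<in> topspace X" "f n x \<noteq> 0" using nz[of n] by blast
    obtain k where "zm k (f n x) \<notin> U" using nss_mult[OF U(3) x(2)] by blast
    then show "\<exists>t. fst t \<in> topspace X \<and> zm (snd t) (f n (fst t)) \<notin> U"
      using x(1) by (intro exI[of _ "(x,k)"]) simp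
  qed
  then obtain T where T: "\<forall>n. fst (T n) \<in> topspace X \<and> zm (snd (T n)) (f n (fst (T n))) \<notin> U"
    by (rule choice[THEN exE]) blast
  define xp where "xp n = fst (T n)" for n
  define m where "m n = snd (T n)" for n
  define b where "b n = zm (m n) (f n (xp n))" for n
  define g where "g n x = zm (m n) (f n x)" for n x
  have xpt: "xp n \<in> topspace X" for n using T xp_def by simp
  have bU: "b n \<notin> U" for n using T xp_def m_def b_def by simp
  have gc: "continuous_map X euclidean (g n)" for n
    unfolding g_def by (rule cm_compose_on[OF cont zm_cont])
  define Op where "Op n = {x \<in> topspace X. - b n + g n x \<in> V}" for n
  have Opo: "openin X (Op n)" for n
  proof -
    have "continuous_map X euclidean (\<lambda>x. - b n + g n x)"
      by (rule cm_compose_on[OF gc]) (intro continuous_intros)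
    then show ?thesis unfolding Op_def
      by (rule openin_continuous_map_preimage) (simp add: V(1))
  qed
  have Opne: "Op n \<noteq> {}" for n
  proof -
    have "xp n \<in> Op n" unfolding Op_def b_def g_def using xpt V(2) by simp
    then show ?thesis by blast
  qed
  have "\<exists>p\<in>topspace X. \<forall>W. openin X W \<and> p \<in> W \<longrightarrow> (\<forall>N. \<exists>n\<ge>N. W \<inter> Op n \<noteq> {})"
    by (rule pseudo_cluster[OF cr pc]) (use Opo Opne in auto)
  then obtain p where p: "p \<in> topspace X" "\<forall>W. openin X W \<and> p \<in> W \<longrightarrow> (\<forall>N. \<exists>n\<ge>N. W \<inter> Op n \<noteq> {})"
    by blast
  obtain Np where Np: "\<And>n. n \<ge> Np \<Longrightarrow> f n p = 0" using ev[OF p(1)] by blast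
  define N0 where "N0 = Suc Np"
  define w where "w F i x = (if i \<in> F then g i x else 0)" for F i x
  have wc: "continuous_map X euclidean (w F i)" for F i
  proof -
    have "w F i = (if i \<in> F then g i else (\<lambda>x. 0))" by (simp add: fun_eq_iff w_def)
    then show ?thesis using gc[of i] by simp
  qed
  define Y where "Y B = {x \<in> topspace X. \<forall>F \<in> Pow {N0..<B}. psum (\<lambda>i. w F i x) B \<in> V}" for B
  have Yo: "openin X (Y B)" for B
  proof -
    have eq: "Y B = (\<Inter>F\<in>Pow {N0..<B}. {x \<in> topspace X. psum (\<lambda>i. w F i x) B \<in> V}) \<inter> topspace X"
      unfolding Y_def by blast
    have "openin X {x \<in> topspace X. psum (\<lambda>i. w F i x) B \<in> V}" for F
      by (rule openin_continuous_map_preimage[OF psum_cont[OF wc]]) (simp add: V(1))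
    then show ?thesis unfolding eq by (intro openin_INT) simp_all
  qed
  have pY: "p \<in> Y B" for B
  proof -
    have "psum (\<lambda>i. w F i p) B = 0" if "F \<subseteq> {N0..<B}" for F
    proof (rule psum_zero)
      fix i show "w F i p = 0"
      proof (cases "i \<in> F")
        case True
        then have "i \<ge> Np" using that N0_def by auto
        then show ?thesis using Np unfolding w_def g_def by simp
      qed (simp add: w_def)
    qed
    then show ?thesis unfolding Y_def using p(1) V(2) by simp
  qed
  have step: "\<exists>t. B \<le> fst t \<and> fst t < snd (snd t) \<and> openin X (fst (snd t)) \<and> fst (snd t) \<noteq> {}
      \<and> fst (snd t) \<subseteq> Op (fst t) \<and> fst (snd t) \<subseteq> Y B \<and> (\<forall>n\<ge>snd (snd t). \<forall>x\<in>fst (snd t). f n x = 0)" for B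
  proof -
    have "\<exists>n\<ge>B. Y B \<inter> Op n \<noteq> {}" by (rule p(2)[rule_format, OF conjI[OF Yo[of B] pY[of B]]])
    then obtain j where j: "j \<ge> B" "Y B \<inter> Op j \<noteq> {}" by blast
    have YO: "openin X (Y B \<inter> Op j)" using Yo[of B] Opo[of j] by (rule openin_Int)
    obtain R N where R: "openin X R" "R \<noteq> {}" "R \<subseteq> Y B \<inter> Op j" "\<forall>n\<ge>N. \<forall>x\<in>R. f n x = 0"
      using local_vanish[OF cr pc cont ev YO j(2)] by blast
    show ?thesis
    proof (intro exI[of _ "(j, R, max N (Suc j))"] conjI)
      show "\<forall>n\<ge>snd (snd (j, R, max N (Suc j))). \<forall>x\<in>fst (snd (j, R, max N (Suc j))). f n x = 0"
        using R(4) by simp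
    qed (use j R in auto)
  qed
  define ch where "ch B = (SOME t. B \<le> fst t \<and> fst t < snd (snd t) \<and> openin X (fst (snd t)) \<and> fst (snd t) \<noteq> {}
      \<and> fst (snd t) \<subseteq> Op (fst t) \<and> fst (snd t) \<subseteq> Y B \<and> (\<forall>n\<ge>snd (snd t). \<forall>x\<in>fst (snd t). f n x = 0))" for B
  have chP: "B \<le> fst (ch B) \<and> fst (ch B) < snd (snd (ch B)) \<and> openin X (fst (snd (ch B))) \<and> fst (snd (ch B)) \<noteq> {}
      \<and> fst (snd (ch B)) \<subseteq> Op (fst (ch B)) \<and> fst (snd (ch B)) \<subseteq> Y B \<and> (\<forall>n\<ge>snd (snd (ch B)). \<forall>x\<in>fst (snd (ch B)). f n x = 0)" for B
    unfolding ch_def by (rule someI_ex[OF step])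
  define Bs where "Bs = rec_nat N0 (\<lambda>k b. snd (snd (ch b)))"
  have Bs0: "Bs 0 = N0" by (simp add: Bs_def)
  have BsS: "Bs (Suc k) = snd (snd (ch (Bs k)))" for k by (simp add: Bs_def)
  define jj where "jj k = fst (ch (Bs k))" for k
  define RR where "RR k = fst (snd (ch (Bs k)))" for k
  have jB: "Bs k \<le> jj k" "jj k < Bs (Suc k)" for k using chP[of "Bs k"] BsS jj_def by auto
  have RRo: "openin X (RR k)" and RRne: "RR k \<noteq> {}" and RROp: "RR k \<subseteq> Op (jj k)"
    and RRY: "RR k \<subseteq> Y (Bs k)" and RRz: "\<And>n x. n \<ge> Bs (Suc k) \<Longrightarrow> x \<in> RR k \<Longrightarrow> f n x = 0" for k
    using chP[of "Bs k"] BsS RR_def jj_def by auto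
  have smB: "strict_mono Bs"
    unfolding strict_mono_Suc_iff using jB by (meson le_less_trans)
  have smj: "strict_mono jj"
    unfolding strict_mono_Suc_iff using jB by (meson less_le_trans)
  have Bsk: "k \<le> Bs k" for k using strict_mono_imp_increasing[OF smB] by simp
  have BsN0: "N0 \<le> Bs k" for k using strict_mono_less_eq[OF smB, of 0 k] Bs0 by simp
  have "\<exists>q\<in>topspace X. \<forall>W. openin X W \<and> q \<in> W \<longrightarrow> (\<forall>N. \<exists>n\<ge>N. W \<inter> RR n \<noteq> {})"
    by (rule pseudo_cluster[OF cr pc]) (use RRo RRne in auto)
  then obtain q where q: "q \<in> topspace X" "\<forall>W. openin X W \<and> q \<in> W \<longrightarrow> (\<forall>N. \<exists>n\<ge>N. W \<inter> RR n \<noteq> {})"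
    by blast
  obtain K where K: "\<And>n. n \<ge> K \<Longrightarrow> f n q = 0" using ev[OF q(1)] by blast
  define J where "J = jj ` {K..}"
  define z where "z i = (if i \<in> J then m i else 0)" for i
  have zw: "(\<lambda>i. zm (z i) (f i x)) = (\<lambda>i. w J i x)" for x
    by (simp add: fun_eq_iff z_def w_def g_def)
  obtain h where hc: "continuous_map X euclidean h"
    and hl: "\<And>x. x \<in> topspace X \<Longrightarrow> psum (\<lambda>i. w J i x) \<longlonglongrightarrow> h x"
    using H[of z] unfolding zw by blast
  have Jbig: "i \<ge> K" if iJ: "i \<in> J" for i
  proof -
    obtain k where "k \<ge> K" "i = jj k" using iJ J_def by auto
    then show ?thesis using jB(1)[of k] Bsk[of k] by simp
  qed
  have hq: "h q = 0"
  proof -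
    have e: "psum (\<lambda>i. w J i q) = (\<lambda>k. 0)"
    proof (rule ext)
      fix k show "psum (\<lambda>i. w J i q) k = 0"
        by (rule psum_zero) (simp add: w_def g_def K Jbig)
    qed
    have "psum (\<lambda>i. w J i q) \<longlonglongrightarrow> 0" unfolding e by simp
    then show ?thesis using hl[OF q(1)] LIMSEQ_unique by blast
  qed
  have HO: "openin X {x \<in> topspace X. h x \<in> V}"
    by (rule openin_continuous_map_preimage[OF hc]) (simp add: V(1))
  have HQ: "q \<in> {x \<in> topspace X. h x \<in> V}" using q(1) hq V(2) by simp
  have "\<exists>n\<ge>K. {x \<in> topspace X. h x \<in> V} \<inter> RR n \<noteq> {}"
    by (rule q(2)[rule_format, OF conjI[OF HO HQ]])
  then obtain k where k: "k \<ge> K" "{x \<in> topspace X. h x \<in> V} \<inter> RR k \<noteq> {}"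
    by blast
  then obtain x where x: "x \<in> topspace X" "h x \<in> V" "x \<in> RR k" by blast
  have jkJ: "jj k \<in> J" using k(1) J_def by blast
  have jk1: "jj k \<ge> 1" using jB(1)[of k] BsN0[of k] N0_def by simp
  have stab: "w J i x = 0" if ji: "jj k < i" for i
  proof (cases "i \<in> J")
    case True
    then obtain k' where k': "i = jj k'" using J_def by blast
    then have "k < k'" using ji strict_mono_less[OF smj] by simp
    then have "Bs (Suc k) \<le> Bs k'" using strict_mono_less_eq[OF smB] by simp
    then have "Bs (Suc k) \<le> i" using jB(1)[of k'] k' by simp
    then show ?thesis using RRz[OF _ x(3)] unfolding w_def g_def by simp
  qed (simp add: w_def)
  have hx: "h x = psum (\<lambda>i. w J i x) (jj k)"
  proof -
    have "(\<lambda>n. psum (\<lambda>i. w J i x) (n + jj k)) \<longlonglongrightarrow> h x"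
      using LIMSEQ_ignore_initial_segment[OF hl[OF x(1)]] by simp
    moreover have "psum (\<lambda>i. w J i x) (n + jj k) = psum (\<lambda>i. w J i x) (jj k)" for n
      by (rule psum_stable) (use stab in auto)
    then have "(\<lambda>n. psum (\<lambda>i. w J i x) (n + jj k)) = (\<lambda>n. psum (\<lambda>i. w J i x) (jj k))" by (rule ext)
    ultimately have "(\<lambda>n. psum (\<lambda>i. w J i x) (jj k)) \<longlonglongrightarrow> h x" by simp
    then show ?thesis by (rule LIMSEQ_unique[OF _ tendsto_const])
  qed
  define a where "a = psum (\<lambda>i. w J i x) (jj k - 1)"
  obtain j' where j': "jj k = Suc j'" using jk1 by (cases "jj k") auto
  have "psum (\<lambda>i. w J i x) (jj k) = a + w J (jj k) x" unfolding a_def j' by simp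
  then have hx2: "h x = a + g (jj k) x" using hx jkJ by (simp add: w_def)
  define F where "F = J \<inter> {..<jj k}"
  have FB: "F \<subseteq> {N0..<Bs k}"
  proof
    fix i assume "i \<in> F"
    then obtain k' where k': "k' \<ge> K" "i = jj k'" "jj k' < jj k" using F_def J_def by auto
    then have "k' < k" using strict_mono_less[OF smj] by simp
    then have "Bs (Suc k') \<le> Bs k" using strict_mono_less_eq[OF smB] by simp
    then show "i \<in> {N0..<Bs k}" using jB[of k'] BsN0[of k'] k' by simp
  qed
  have wF0: "w F i x = 0" if "Bs k - 1 < i" for i
  proof (cases "i \<in> F")
    case True
    then have "i < Bs k" using FB by auto
    then show ?thesis using that by simp
  qed (simp add: w_def)
  have "psum (\<lambda>i. w F i x) (Bs k) \<in> V" using RRY x(3) FB unfolding Y_def by blast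
  moreover have "psum (\<lambda>i. w F i x) (Bs k) = psum (\<lambda>i. w F i x) (Bs k - 1)"
    by (rule psum_stable) (use wF0 in auto)
  moreover have "psum (\<lambda>i. w F i x) (jj k - 1) = psum (\<lambda>i. w F i x) (Bs k - 1)"
    by (rule psum_stable) (use wF0 jB(1)[of k] in auto)
  moreover have "psum (\<lambda>i. w F i x) (jj k - 1) = a"
    unfolding a_def by (rule psum_cong) (use jk1 in \<open>auto simp: w_def F_def\<close>)
  ultimately have aV: "a \<in> V" by simp
  have cV: "- b (jj k) + g (jj k) x \<in> V" using RROp x(3) unfolding Op_def by blast
  have "- a + h x + - (- b (jj k) + g (jj k) x) \<in> U" using V(3)[rule_format, OF aV x(2) cV] .
  moreover have "- a + h x + - (- b (jj k) + g (jj k) x) = b (jj k)"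
    unfolding hx2 by (simp add: add.assoc minus_add)
  ultimately show False using bU by simp
qed



lemma Cp_pow_pt:
  fixes c :: "'a \<Rightarrow> 'g::group_add"
  assumes "x \<in> topspace X"
  shows "((\<lambda>y. Cp_mul X y c) ^^ n) (Cp_one X) x = ((\<lambda>y. y + c x) ^^ n) 0"
  by (induction n) (simp_all add: Cp_mul_def Cp_one_def assms)

lemma gz_pt:
  fixes f :: "'a \<Rightarrow> 'g::group_add"
  assumes "x \<in> topspace X"
  shows "gzpow (Cp_mul X) (Cp_inv X) (Cp_one X) f k x = gzpow (+) uminus 0 (f x) k"
  by (simp add: gzpow_def Cp_pow_pt[OF assms] Cp_inv_def assms)

lemma Cp_mul_pt: "x \<in> topspace X \<Longrightarrow> Cp_mul X f g x = f x + g x"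
  by (simp add: Cp_mul_def)

lemma pp_pt:
  fixes a :: "nat \<Rightarrow> 'a \<Rightarrow> 'g::group_add"
  assumes "x \<in> topspace X"
  shows "partial_prod (Cp_mul X) (Cp_inv X) (Cp_one X) a z n x = partial_prod (+) uminus 0 (\<lambda>i. a i x) z n"
  by (induction n) (simp_all only: partial_prod.simps Cp_mul_pt[OF assms] gz_pt[OF assms])

theorem theorem6p3:
  fixes X :: "'a topology"
  assumes "topspace X \<noteq> {}"
    and "tychonoff_space X"
    and "pseudocompact X"
    and "NSS TYPE('g::{topological_group_add,t2_space})"
  shows "TAP (Cp_top X :: ('a \<Rightarrow> 'g) topology) (Cp_mul X) (Cp_inv X) (Cp_one X)"
proof -
  have cr: "completely_regular_space X" using assms(2) unfolding tychonoff_space_def by blast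
  obtain U :: "'g set" where U: "open U" "0 \<in> U" "\<forall>S. is_add_subgroup S \<and> S \<subseteq> U \<longrightarrow> S = {0}"
    using assms(4) unfolding NSS_def by blast
  show ?thesis unfolding TAP_def
  proof (intro allI impI)
    fix A :: "('a \<Rightarrow> 'g) set"
    assume A: "A \<subseteq> topspace (Cp_top X) \<and> absolutely_productive (Cp_top X) (Cp_mul X) (Cp_inv X) (Cp_one X) A"
    show "finite A"
    proof (rule ccontr)
      assume "infinite A"
      then have "infinite (A - {Cp_one X})" by simp
      then obtain a :: "nat \<Rightarrow> 'a \<Rightarrow> 'g" where a: "inj a" "range a \<subseteq> A - {Cp_one X}"
        using infinite_countable_subset by blast
      have aA: "range a \<subseteq> A" using a(2) by blast
      have carr: "a n \<in> Cp_carrier X" for n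
        using A a(2) unfolding Cp_top_def by auto
      have cont: "continuous_map X euclidean (a n)" for n
        using carr[of n] unfolding Cp_carrier_def by simp
      have H: "\<exists>h. continuous_map X euclidean h \<and> (\<forall>x\<in>topspace X. (\<lambda>k. psum (\<lambda>i. zm (z i) (a i x)) k) \<longlonglongrightarrow> h x)" for z
      proof -
        obtain h where h: "limitin (Cp_top X) (partial_prod (Cp_mul X) (Cp_inv X) (Cp_one X) a z) h sequentially"
          using A a(1) aA unfolding absolutely_productive_def by blast
        have hC: "h \<in> Cp_carrier X"
          and hP: "limitin (product_topology (\<lambda>_. euclidean) (topspace X)) (partial_prod (Cp_mul X) (Cp_inv X) (Cp_one X) a z) h sequentially"
          using h unfolding Cp_top_def limitin_subtopology by auto
        have "\<forall>x\<in>topspace X. limitin euclidean (\<lambda>c. partial_prod (Cp_mul X) (Cp_inv X) (Cp_one X) a z c x) (h x) sequentially"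
          using hP unfolding limitin_componentwise by blast
        then have "\<forall>x\<in>topspace X. (\<lambda>k. psum (\<lambda>i. zm (z i) (a i x)) k) \<longlonglongrightarrow> h x"
          by (simp add: pp_pt pp_psum)
        moreover have "continuous_map X euclidean h" using hC unfolding Cp_carrier_def by simp
        ultimately show ?thesis by blast
      qed
      have nz: "\<exists>x\<in>topspace X. a n x \<noteq> 0" for n
      proof (rule ccontr)
        assume "\<not> (\<exists>x\<in>topspace X. a n x \<noteq> 0)"
        then have z: "\<forall>x\<in>topspace X. a n x = 0" by blast
        have exn: "a n \<in> extensional (topspace X)" using carr[of n] unfolding Cp_carrier_def by simp
        have "a n = Cp_one X"
        proof (rule ext)
          fix x show "a n x = Cp_one X x"
            using z exn unfolding Cp_one_def extensional_def by (cases "x \<in> topspace X") auto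
        qed
        then show False using a(2) by blast
      qed
      show False by (rule main_lemma[OF cr assms(3) cont H nz U])
    qed
  qed
qed


end
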